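(* Let $p_1,\ldots,p_m\in\mathbb Z_{>0}$ and $p=\operatorname{lcm}(p_1,\ldots,p_m)$. Let $\Gamma_1,\ldots,\Gamma_m$ be words in affine letters, $e_1,\ldots,e_m\in\mathbb Z_{\ge0}$, $z\in\mathbb C$, $t\in\mathbb Z_{\ge0}$, and $a_\nu,b_\nu,q_\nu\in\mathbb C$ for $1\le\nu\le t$ ($t=0$ allowed). Assume that all affine factors appearing are nonzero at the positive integers at which they are evaluated, after all scale changes (that is, each affine factor $(a,b)$ occurring in a letter of $\Gamma_j$ remains nonzero when its slope is replaced by $a/(p/p_j)$ and it is evaluated at positive integers up to $pk$, and $a_\nu m/p+b_\nu\ne0$ for positive integers $m\le pk$), and fix compatible branches of the powers. Then for every positive integer $k$, \[ S(k)=\sum_{n=1}^{k}z^n\prod_{\nu=1}^{t}(a_\nu n+b_\nu)^{q_\nu}\prod_{j=1}^{m}\mathcal G_{\Gamma_j}(p_jn)^{e_j}\in\operatorname{span}_{\mathbb C}\{\mathcal G_\Delta(pk)\}_\Delta, \] where $\Delta$ ranges over words in affine letters.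
   Context: An affine letter is a triple $L=(\boldsymbol\rho,\sigma,\mathbf A)$ with $\boldsymbol\rho=(\rho_1,\ldots,\rho_t)\in\mathbb C^t$, $\sigma\in\mathbb C$, $\mathbf A=((a_1,b_1),\ldots,(a_t,b_t))$, $a_\nu,b_\nu\in\mathbb C$; its value at a positive integer $n$ is $L(n)=\sigma^n\prod_{\nu=1}^t(a_\nu n+b_\nu)^{-\rho_\nu}$ (branches fixed). For a word $\Gamma=(L_1,\ldots,L_d)$ of affine letters, $\mathcal G_\Gamma(N)=\sum_{N\ge n_1>\cdots>n_d\ge1}\prod_{j=1}^dL_j(n_j)$ and $\mathcal G_\emptyset(N)=1$. *)

theory Defs
  imports "HOL-Analysis.Complex_Transcendental"
begin

text \<open>An affine letter L = (sigma, [(rho_1,a_1,b_1),...,(rho_t,a_t,b_t)]).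
  Its value at n is sigma^n * prod_nu (a_nu n + b_nu) powr (-rho_nu),
  using the principal branch of complex powr.\<close>
type_synonym aletter = "complex \<times> (complex \<times> complex \<times> complex) list"
type_synonym aword = "aletter list"

definition letter_val :: "aletter \<Rightarrow> nat \<Rightarrow> complex" where
  "letter_val L n = fst L ^ n *
     (\<Prod>(\<rho>, a, b) \<leftarrow> snd L. ((a::complex) * of_nat n + b) powr (- (\<rho>::complex)))"

text \<open>G_Gamma(N) = sum over N >= n_1 > ... > n_d >= 1 of prod_j L_j(n_j),
  written recursively on the word; G_[] = 1.\<close>
fun Gw :: "aword \<Rightarrow> nat \<Rightarrow> complex" where
  "Gw [] N = 1"
| "Gw (L # \<Gamma>) N = (\<Sum>n\<in>{1..N}. letter_val L n * Gw \<Gamma> (n - 1))"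

end

theory Submission imports Defs begin

definition lc :: "(complex \<times> aword) list \<Rightarrow> nat \<Rightarrow> complex" where
  "lc cs N = (\<Sum>(c, \<Delta>) \<leftarrow> cs. c * Gw \<Delta> N)"

definition rep :: "(nat \<Rightarrow> complex) \<Rightarrow> bool" where
  "rep F \<longleftrightarrow> (\<exists>cs. \<forall>N. F N = lc cs N)"

lemma lc_Nil[simp]: "lc [] N = 0" by (simp add: lc_def)
lemma lc_Cons[simp]: "lc ((c,\<Delta>)#cs) N = c * Gw \<Delta> N + lc cs N" by (simp add: lc_def)
lemma lc_append: "lc (xs @ ys) N = lc xs N + lc ys N" by (simp add: lc_def)
lemma lc_smult: "lc (map (\<lambda>(c,\<Delta>). (a*c,\<Delta>)) cs) N = a * lc cs N"
  by (induction cs) (auto simp: algebra_simps)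

lemma rep_Gw: "rep (Gw \<Delta>)"
  unfolding rep_def by (rule exI[of _ "[(1,\<Delta>)]"]) simp

lemma rep_cong: "rep F \<Longrightarrow> (\<And>N. F N = G N) \<Longrightarrow> rep G"
  unfolding rep_def by metis

lemma rep_one: "rep (\<lambda>N. 1)"
  by (rule rep_cong[OF rep_Gw[of "[]"]]) simp

lemma rep_zero: "rep (\<lambda>N. 0)"
  unfolding rep_def by (rule exI[of _ "[]"]) simp

lemma rep_add: "rep F \<Longrightarrow> rep G \<Longrightarrow> rep (\<lambda>N. F N + G N)"
  unfolding rep_def by (metis lc_append)

lemma rep_smult: "rep F \<Longrightarrow> rep (\<lambda>N. a * F N)"
  unfolding rep_def by (metis lc_smult)


lemma rep_sum: "finite I \<Longrightarrow> (\<And>i. i \<in> I \<Longrightarrow> rep (f i)) \<Longrightarrow> rep (\<lambda>N. \<Sum>i\<in>I. f i N)"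
  by (induction I rule: finite_induct) (auto intro: rep_add rep_zero)

lemma rep_lc_induct:
  assumes "rep F" and "\<And>\<Delta>. rep (T (Gw \<Delta>))" and "T (\<lambda>N. 0) = (\<lambda>N. 0)"
    and "\<And>c f g. T (\<lambda>N. c * f N + g N) = (\<lambda>N. c * T f N + T g N)"
  shows "rep (T F)"
proof -
  obtain cs where F: "\<And>N. F N = lc cs N" using assms(1) unfolding rep_def by auto
  have "F = lc cs" using F by auto
  moreover have "rep (T (lc cs))"
  proof (induction cs)
    case Nil
    then show ?case using assms(3) rep_zero by (simp add: lc_def[abs_def])
  next
    case (Cons x cs)
    obtain c \<Delta> where x: "x = (c,\<Delta>)" by force
    have "lc (x#cs) = (\<lambda>N. c * Gw \<Delta> N + lc cs N)" using x by auto
    then show ?case using assms(4) Cons assms(2) by (auto intro!: rep_add rep_smult)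
  qed
  ultimately show ?thesis by simp
qed

lemma rep_prepend:
  assumes "rep F"
  shows "rep (\<lambda>N. \<Sum>n=1..N. letter_val L n * F (n-1))"
  using assms
proof (rule rep_lc_induct[where T="\<lambda>F N. \<Sum>n=1..N. letter_val L n * F (n-1)"])
  show "rep (\<lambda>N. \<Sum>n=1..N. letter_val L n * Gw \<Delta> (n-1))" for \<Delta>
    by (rule rep_cong[OF rep_Gw[of "L#\<Delta>"]]) simp
qed (auto simp: sum.distrib sum_distrib_left algebra_simps fun_eq_iff)

definition lmul :: "aletter \<Rightarrow> aletter \<Rightarrow> aletter" where
  "lmul A B = (fst A * fst B, snd A @ snd B)"

lemma letter_val_lmul: "letter_val (lmul A B) n = letter_val A n * letter_val B n"
  by (simp add: lmul_def letter_val_def power_mult_distrib algebra_simps)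

lemma Gw_Suc_Cons: "Gw (L#\<Delta>) (Suc n) = Gw (L#\<Delta>) n + letter_val L (Suc n) * Gw \<Delta> n"
  by simp

lemma rep_prepend0:
  assumes "rep F"
  shows "rep (\<lambda>N. \<Sum>n=1..N. letter_val L n * F n)"
  using assms
proof (rule rep_lc_induct[where T="\<lambda>F N. \<Sum>n=1..N. letter_val L n * F n"])
  fix \<Delta>
  show "rep (\<lambda>N. \<Sum>n=1..N. letter_val L n * Gw \<Delta> n)"
  proof (cases \<Delta>)
    case Nil
    then show ?thesis by (rule_tac rep_cong[OF rep_Gw[of "[L]"]]) simp
  next
    case (Cons L1 \<Delta>')
    have eq: "(\<Sum>n=1..N. letter_val L n * Gw \<Delta> n) = Gw (L#\<Delta>) N + Gw (lmul L L1 # \<Delta>') N" for N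
    proof -
      have "(\<Sum>n=1..N. letter_val L n * Gw \<Delta> n) = (\<Sum>n=1..N. letter_val L n * Gw \<Delta> (n-1)
              + letter_val (lmul L L1) n * Gw \<Delta>' (n-1))"
      proof (rule sum.cong[OF refl])
        fix n assume "n \<in> {1..N}"
        then obtain k where n: "n = Suc k" by (cases n) auto
        show "letter_val L n * Gw \<Delta> n = letter_val L n * Gw \<Delta> (n-1)
              + letter_val (lmul L L1) n * Gw \<Delta>' (n-1)"
          unfolding n Cons Gw_Suc_Cons letter_val_lmul by (simp add: algebra_simps)
      qed
      then show ?thesis by (simp add: sum.distrib)
    qed
    show ?thesis by (rule rep_cong[OF rep_add[OF rep_Gw[of "L#\<Delta>"] rep_Gw[of "lmul L L1 # \<Delta>'"]]]) (simp only: eq)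
  qed
qed (auto simp: sum.distrib sum_distrib_left algebra_simps fun_eq_iff)

lemma Gw_prod_eq:
  "Gw (A#X) N * Gw (B#Y) N = (\<Sum>n=1..N. letter_val A n * (Gw X (n-1) * Gw (B#Y) (n-1))
     + letter_val B n * (Gw (A#X) (n-1) * Gw Y (n-1))
     + letter_val (lmul A B) n * (Gw X (n-1) * Gw Y (n-1)))"
proof (induction N)
  case 0
  then show ?case by simp
next
  case (Suc N)
  have s: "(\<Sum>n=1..Suc N. f n) = (\<Sum>n=1..N. f n) + f (Suc N)" for f :: "nat \<Rightarrow> complex"
    by simp
  show ?case
    apply (subst s)
    apply (subst Suc.IH[symmetric])
    apply (simp only: Gw_Suc_Cons letter_val_lmul diff_Suc_1)
    by (simp add: algebra_simps del: Gw.simps)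
qed

lemma rep_Gw_mult: "rep (\<lambda>N. Gw \<Delta>1 N * Gw \<Delta>2 N)"
proof (induction \<Delta>1 arbitrary: \<Delta>2)
  case Nil
  then show ?case using rep_Gw[of \<Delta>2] by (simp add: rep_cong)
next
  case (Cons A X)
  note IHX = Cons.IH
  show ?case
  proof (induction \<Delta>2)
    case Nil
    then show ?case by (rule rep_cong[OF rep_Gw[of "A#X"]]) simp
  next
    case (Cons B Y)
    show ?case
      unfolding Gw_prod_eq sum.distrib
      by (intro rep_add rep_prepend[of "\<lambda>N. Gw X N * Gw (B#Y) N", OF IHX]
         rep_prepend[of "\<lambda>N. Gw (A#X) N * Gw Y N", OF Cons.IH]
         rep_prepend[of "\<lambda>N. Gw X N * Gw Y N", OF IHX])
  qed
qed

lemma rep_mult: assumes "rep F" "rep G" shows "rep (\<lambda>N. F N * G N)"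
proof -
  have "rep (\<lambda>N. Gw \<Delta> N * G N)" for \<Delta>
    using assms(2)
    by (rule rep_lc_induct[where T="\<lambda>G N. Gw \<Delta> N * G N"])
       (auto simp: rep_Gw_mult algebra_simps fun_eq_iff)
  then show ?thesis using assms(1)
    by (rule_tac rep_lc_induct[where T="\<lambda>F N. F N * G N"]) (auto simp: algebra_simps fun_eq_iff)
qed

lemma rep_power: "rep F \<Longrightarrow> rep (\<lambda>N. F N ^ k)"
  by (induction k) (auto intro: rep_mult rep_one)

lemma rep_prod: "finite I \<Longrightarrow> (\<And>i. i \<in> I \<Longrightarrow> rep (f i)) \<Longrightarrow> rep (\<lambda>N. \<Prod>i\<in>I. f i N)"
  by (induction I rule: finite_induct) (auto intro: rep_mult rep_one)


definition lv :: "(complex \<times> aletter) list \<Rightarrow> nat \<Rightarrow> complex" where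
  "lv Ls n = (\<Sum>(c, L) \<leftarrow> Ls. c * letter_val L n)"

lemma lv_Nil[simp]: "lv [] n = 0" by (simp add: lv_def)
lemma lv_Cons[simp]: "lv ((c,L)#Ls) n = c * letter_val L n + lv Ls n" by (simp add: lv_def)

lemma rep_prepend_lv:
  assumes "rep F"
  shows "rep (\<lambda>N. \<Sum>n=1..N. lv Ls n * F (n-1))"
proof (induction Ls)
  case Nil
  then show ?case by (simp add: rep_zero)
next
  case (Cons x Ls)
  obtain c L where x: "x = (c,L)" by (cases x)
  have "rep (\<lambda>N. c * (\<Sum>n=1..N. letter_val L n * F (n-1)) + (\<Sum>n=1..N. lv Ls n * F (n-1)))"
    by (intro rep_add rep_smult rep_prepend assms Cons)
  then show ?case
    by (rule rep_cong) (simp add: x sum.distrib sum_distrib_left algebra_simps)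
qed

lemma rep_prepend0_lv:
  assumes "rep F"
  shows "rep (\<lambda>N. \<Sum>n=1..N. lv Ls n * F n)"
proof (induction Ls)
  case Nil
  then show ?case by (simp add: rep_zero)
next
  case (Cons x Ls)
  obtain c L where x: "x = (c,L)" by (cases x)
  have "rep (\<lambda>N. c * (\<Sum>n=1..N. letter_val L n * F n) + (\<Sum>n=1..N. lv Ls n * F n))"
    by (intro rep_add rep_smult rep_prepend0 assms Cons)
  then show ?case
    by (rule rep_cong) (simp add: x sum.distrib sum_distrib_left algebra_simps)
qed

lemma sum_filter_div:
  assumes "(r::nat) > 0"
  shows "(\<Sum>M=1..N. if r dvd M then f (M div r) else 0) = (\<Sum>n=1..N div r. f n)"
proof (induction N)
  case 0
  then show ?case by simp
next
  case (Suc N)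
  show ?case
  proof (cases "r dvd Suc N")
    case True
    then have "Suc N div r = Suc (N div r)" by (simp add: div_Suc dvd_eq_mod_eq_0)
    then show ?thesis using Suc True by simp
  next
    case False
    then have "Suc N div r = N div r" by (simp add: div_Suc dvd_eq_mod_eq_0)
    then show ?thesis using Suc False by simp
  qed
qed

lemma complex_root_exists: "(r::nat) > 0 \<Longrightarrow> \<exists>s::complex. s ^ r = \<sigma>"
proof (cases "\<sigma> = 0")
  case True
  assume "r > 0" then show ?thesis using True by (intro exI[of _ 0]) simp
next
  case False
  assume r: "r > 0"
  have "exp (Ln \<sigma> / of_nat r) ^ r = exp (of_nat r * (Ln \<sigma> / of_nat r))"
    by (rule exp_of_nat_mult[symmetric])
  also have "\<dots> = \<sigma>" using r False by simp
  finally show ?thesis by blast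
qed

lemma unity_sum:
  assumes r: "(r::nat) > 0"
  defines "\<omega> \<equiv> exp (2 * of_real pi * \<i> / of_nat r)"
  shows "(\<Sum>j<r. (\<omega> ^ j) ^ M) = (if r dvd M then of_nat r else 0)"
proof -
  have wM: "\<omega> ^ M = exp (2 * of_real pi * \<i> * of_nat M / of_nat r)"
    unfolding \<omega>_def exp_of_nat_mult[symmetric] by (simp add: algebra_simps)
  have eq1: "\<omega> ^ M = 1 \<longleftrightarrow> r dvd M"
    unfolding wM using complex_root_unity_eq_1[of r M] r by simp
  have wr: "(\<omega> ^ M) ^ r = 1"
    using complex_root_unity[of r M] r unfolding wM by simp
  have "(\<Sum>j<r. (\<omega> ^ j) ^ M) = (\<Sum>j<r. (\<omega> ^ M) ^ j)"
    by (simp add: power_mult[symmetric] mult.commute)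
  also have "\<dots> = (if r dvd M then of_nat r else 0)"
    using eq1 wr by (auto simp: sum_gp_strict)
  finally show ?thesis .
qed


definition sletter :: "nat \<Rightarrow> complex \<Rightarrow> aletter \<Rightarrow> aletter" where
  "sletter r w L = (w, map (\<lambda>(\<rho>, a, b). (\<rho>, a / of_nat r, b)) (snd L))"

lemma letter_val_sletter:
  "letter_val (sletter r w L) M = w ^ M *
     (\<Prod>(\<rho>, a, b) \<leftarrow> snd L. (a / of_nat r * of_nat M + b) powr (- \<rho>))"
  unfolding sletter_def letter_val_def by (simp add: o_def split_def)

lemma filter_letter:
  assumes r: "(r::nat) > 0"
  shows "\<exists>Ls. \<forall>M. (if r dvd M then letter_val L (M div r) else 0) = lv Ls M"
proof -
  obtain s where s: "s ^ r = fst L" using complex_root_exists[OF r] by blast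
  define \<omega> where "\<omega> = exp (2 * of_real pi * \<i> / of_nat r)"
  define Y where "Y M = (\<Prod>(\<rho>, a, b) \<leftarrow> snd L. (a / of_nat r * of_nat M + b) powr (- \<rho>))" for M :: nat
  define Ls where "Ls = map (\<lambda>j. (1 / of_nat r :: complex, sletter r (\<omega> ^ j * s) L)) [0..<r]"
  have "lv Ls M = (if r dvd M then letter_val L (M div r) else 0)" for M
  proof -
    have "lv Ls M = (\<Sum>j<r. 1 / of_nat r * ((\<omega> ^ j * s) ^ M * Y M))"
      unfolding Ls_def lv_def Y_def
      by (simp add: o_def sum_list_distinct_conv_sum_set atLeast0LessThan letter_val_sletter)
    also have "\<dots> = 1 / of_nat r * (\<Sum>j<r. (\<omega> ^ j) ^ M) * (s ^ M * Y M)"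
      by (simp add: sum_distrib_left sum_distrib_right power_mult_distrib algebra_simps)
    also have "\<dots> = (if r dvd M then s ^ M * Y M else 0)"
      unfolding \<omega>_def unity_sum[OF r] using r by simp
    also have "\<dots> = (if r dvd M then letter_val L (M div r) else 0)"
    proof (cases "r dvd M")
      case True
      then obtain c where M: "M = r * c" by blast
      have "s ^ M = fst L ^ c" unfolding M s[symmetric] by (simp add: power_mult)
      moreover have "Y M = (\<Prod>(\<rho>, a, b) \<leftarrow> snd L. (a * of_nat c + b) powr (- \<rho>))"
        unfolding Y_def M using r by (simp add: field_simps)
      ultimately show ?thesis using True r M unfolding letter_val_def by simp
    qed simp
    finally show ?thesis .
  qed
  then show ?thesis by metis
qed

lemma rep_scale:
  assumes r: "(r::nat) > 0"
  shows "rep (\<lambda>N. Gw \<Gamma> (N div r))"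
proof (induction \<Gamma>)
  case Nil
  then show ?case by (simp add: rep_one)
next
  case (Cons L \<Gamma>)
  obtain Ls where Ls: "\<And>M. (if r dvd M then letter_val L (M div r) else 0) = lv Ls M"
    using filter_letter[OF r, of L] by blast
  have "Gw (L#\<Gamma>) (N div r) = (\<Sum>M=1..N. lv Ls M * Gw \<Gamma> ((M-1) div r))" for N
  proof -
    have "Gw (L#\<Gamma>) (N div r) = (\<Sum>n=1..N div r. letter_val L n * Gw \<Gamma> (n-1))" by simp
    also have "\<dots> = (\<Sum>M=1..N. if r dvd M then letter_val L (M div r) * Gw \<Gamma> (M div r - 1) else 0)"
      by (rule sum_filter_div[OF r, symmetric])
    also have "\<dots> = (\<Sum>M=1..N. lv Ls M * Gw \<Gamma> ((M-1) div r))"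
    proof (rule sum.cong[OF refl])
      fix M assume M: "M \<in> {1..N}"
      show "(if r dvd M then letter_val L (M div r) * Gw \<Gamma> (M div r - 1) else 0) =
            lv Ls M * Gw \<Gamma> ((M-1) div r)"
      proof (cases "r dvd M")
        case True
        then obtain c where c: "M = r * c" by blast
        with M obtain d where d: "c = Suc d" by (cases c) auto
        have "M - 1 = (r - 1) + d * r" unfolding c d using r by (cases r) auto
        then have "(M - 1) div r = ((r - 1) + d * r) div r" by (simp only:)
        also have "\<dots> = d + (r - 1) div r" using r by (intro div_mult_self1) simp
        also have "\<dots> = c - 1" using r d by simp
        finally have "(M - 1) div r = c - 1" .
        then show ?thesis using True Ls[of M, symmetric] c r by simp
      next
        case False
        then show ?thesis using Ls[of M, symmetric] by simp
      qed
    qed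
    finally show ?thesis .
  qed
  then show ?case
    by (rule_tac rep_cong[OF rep_prepend_lv[OF Cons]]) simp
qed


lemma letter_val_L0:
  "letter_val (z, map (\<lambda>\<nu>. (- q \<nu>, a \<nu>, b \<nu>)) [0..<t]) n
     = z ^ n * (\<Prod>\<nu><t. (a \<nu> * of_nat n + b \<nu>) powr (q \<nu>))"
  unfolding letter_val_def
  by (simp add: o_def prod.distinct_set_conv_list[symmetric] atLeast0LessThan)

theorem theorem6p2:
  fixes m t :: nat
    and p :: "nat \<Rightarrow> nat"
    and \<Gamma> :: "nat \<Rightarrow> aword"
    and e :: "nat \<Rightarrow> nat"
    and z :: complex
    and a b q :: "nat \<Rightarrow> complex"
    and P :: nat
  assumes p_pos: "\<forall>j<m. p j > 0"
    and P_def: "P = Lcm (p ` {..<m})"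
    and nz_words: "\<forall>j<m. \<forall>L\<in>set (\<Gamma> j). \<forall>(\<rho>, a', b')\<in>set (snd L).
                     \<forall>n::nat. n \<ge> 1 \<longrightarrow> a' / of_nat (P div p j) * of_nat n + b' \<noteq> 0"
    and nz_outer: "\<forall>\<nu><t. \<forall>n::nat. n \<ge> 1 \<longrightarrow> a \<nu> * of_nat n / of_nat P + b \<nu> \<noteq> 0"
  shows "\<exists>cs :: (complex \<times> aword) list. \<forall>k::nat. k \<ge> 1 \<longrightarrow>
           (\<Sum>n=1..k. z ^ n * (\<Prod>\<nu><t. (a \<nu> * of_nat n + b \<nu>) powr (q \<nu>))
                       * (\<Prod>j<m. (Gw (\<Gamma> j) (p j * n)) ^ (e j)))
           = (\<Sum>(c, \<Delta>) \<leftarrow> cs. c * Gw \<Delta> (P * k))"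
proof -
  have "Lcm (p ` {..<m}) \<noteq> 0" using p_pos by (subst Lcm_0_iff) auto
  then have Ppos: "P > 0" unfolding P_def using neq0_conv by blast
  have pdvd: "p j dvd P" if "j < m" for j unfolding P_def using that by (auto intro: dvd_Lcm)
  define L0 where "L0 = (z, map (\<lambda>\<nu>. (- q \<nu>, a \<nu>, b \<nu>)) [0..<t])"
  define H where "H M = (\<Prod>j<m. Gw (\<Gamma> j) (M div (P div p j)) ^ e j)" for M
  define H' where "H' n = (\<Prod>j<m. Gw (\<Gamma> j) (p j * n) ^ e j)" for n
  have rH: "rep H" unfolding H_def
  proof (intro rep_prod rep_power rep_scale)
    fix j assume "j \<in> {..<m}"
    then show "0 < P div p j" using pdvd[of j] p_pos Ppos
      by (auto elim!: dvdE)
  qed simp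
  obtain Ls where Ls: "\<And>M. (if P dvd M then letter_val L0 (M div P) else 0) = lv Ls M"
    using filter_letter[OF Ppos, of L0] by blast
  obtain cs where cs: "\<And>N. (\<Sum>M=1..N. lv Ls M * H M) = lc cs N"
    using rep_prepend0_lv[OF rH, of Ls] unfolding rep_def by blast
  have HH: "H M = H' (M div P)" if PM: "P dvd M" for M
  proof -
    obtain c where c: "M = P * c" using PM by blast
    have "M div (P div p j) = p j * c" if jm: "j < m" for j
    proof -
      obtain r where r: "P = p j * r" using pdvd[OF jm] by blast
      have "r > 0" using Ppos r by auto
      then show ?thesis unfolding c r using p_pos jm by simp
    qed
    then show ?thesis unfolding H_def H'_def using c Ppos by simp
  qed
  show ?thesis
  proof (intro exI allI impI)
    fix k :: nat
    have "(\<Sum>(c, \<Delta>) \<leftarrow> cs. c * Gw \<Delta> (P * k)) = lc cs (P * k)" by (simp add: lc_def)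
    also have "\<dots> = (\<Sum>M=1..P*k. lv Ls M * H M)" by (rule cs[symmetric])
    also have "\<dots> = (\<Sum>M=1..P*k. if P dvd M then letter_val L0 (M div P) * H' (M div P) else 0)"
      by (rule sum.cong[OF refl]) (auto simp: Ls[symmetric] HH)
    also have "\<dots> = (\<Sum>n=1..P*k div P. letter_val L0 n * H' n)"
      by (rule sum_filter_div[OF Ppos])
    also have "\<dots> = (\<Sum>n=1..k. z ^ n * (\<Prod>\<nu><t. (a \<nu> * of_nat n + b \<nu>) powr (q \<nu>))
                       * (\<Prod>j<m. (Gw (\<Gamma> j) (p j * n)) ^ (e j)))"
      using Ppos by (simp add: L0_def letter_val_L0 H'_def)
    finally show "(\<Sum>n=1..k. z ^ n * (\<Prod>\<nu><t. (a \<nu> * of_nat n + b \<nu>) powr (q \<nu>))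
                       * (\<Prod>j<m. (Gw (\<Gamma> j) (p j * n)) ^ (e j)))
           = (\<Sum>(c, \<Delta>) \<leftarrow> cs. c * Gw \<Delta> (P * k))" by simp
  qed
qed

end
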